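(* Assume CH. There exists a set $A\subseteq\mathbb{R}^2$ such that for every $y\in\mathbb{R}$ the horizontal slice $A^y=\{x:(x,y)\in A\}$ is a strong Luzin set, for every $x\in\mathbb{R}$ the vertical slice $A_x=\{y:(x,y)\in A\}$ is a strong Sierpiński set, and $A$ is both completely $\mathcal{M}$-nonmeasurable and completely $\mathcal{N}$-nonmeasurable in $\mathbb{R}^2$.
   Context: $\mathcal{M}$ and $\mathcal{N}$ denote the $\sigma$-ideals of meager and Lebesgue-null sets (on $\mathbb{R}$ or $\mathbb{R}^2$). A Luzin set is a set $L\subseteq\mathbb{R}$ with $|L|=\mathfrak{c}$ such that $L\cap M$ is countable for every meager $M$; it is strong Luzin if moreover $L\cap B$ is uncountable for every non-meager Borel $B$. A Sierpiński set is $S\subseteq\mathbb{R}$ with $|S|=\mathfrak{c}$ and $S\cap N$ countable for every null $N$; strong Sierpiński if moreover $S\cap B$ is uncountable for every Borel $B$ of positive measure. A set $A\subseteq\mathbb{R}^2$ is completely $\mathcal{I}$-nonmeasurable if $A$ meets every Borel set $B\notin\mathcal{I}$ and contains no Borel set $B\notin\mathcal{I}$. *)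

theory Defs
  imports "HOL-Analysis.Analysis" "HOL-Library.Equipollence"
begin

definition nowhere_dense :: "'a::topological_space set \<Rightarrow> bool" where
  "nowhere_dense S \<longleftrightarrow> interior (closure S) = {}"

definition meager :: "'a::topological_space set \<Rightarrow> bool" where
  "meager M \<longleftrightarrow> (\<exists>F. countable F \<and> (\<forall>N\<in>F. nowhere_dense N) \<and> M \<subseteq> \<Union>F)"

definition lnull :: "'a::euclidean_space set \<Rightarrow> bool" where
  "lnull N \<longleftrightarrow> N \<in> null_sets lebesgue"

definition CH :: bool where
  "CH \<longleftrightarrow> (\<forall>X::real set. uncountable X \<longrightarrow> X \<approx> (UNIV::real set))"

definition luzin_set :: "real set \<Rightarrow> bool" where
  "luzin_set L \<longleftrightarrow> L \<approx> (UNIV::real set) \<and> (\<forall>M. meager M \<longrightarrow> countable (L \<inter> M))"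

definition strong_luzin_set :: "real set \<Rightarrow> bool" where
  "strong_luzin_set L \<longleftrightarrow> luzin_set L \<and>
     (\<forall>B \<in> sets borel. \<not> meager B \<longrightarrow> uncountable (L \<inter> B))"

definition sierpinski_set :: "real set \<Rightarrow> bool" where
  "sierpinski_set S \<longleftrightarrow> S \<approx> (UNIV::real set) \<and> (\<forall>N. lnull N \<longrightarrow> countable (S \<inter> N))"

definition strong_sierpinski_set :: "real set \<Rightarrow> bool" where
  "strong_sierpinski_set S \<longleftrightarrow> sierpinski_set S \<and>
     (\<forall>B \<in> sets borel. \<not> lnull B \<longrightarrow> uncountable (S \<inter> B))"

definition completely_nonmeasurable :: "('a::topological_space set \<Rightarrow> bool) \<Rightarrow> 'a set \<Rightarrow> bool" where
  "completely_nonmeasurable I A \<longleftrightarrow>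
     (\<forall>B \<in> sets borel. \<not> I B \<longrightarrow> A \<inter> B \<noteq> {} \<and> \<not> B \<subseteq> A)"

end

theory Submission imports Defs begin

lemma meager_subset: "meager M \<Longrightarrow> N \<subseteq> M \<Longrightarrow> meager N"
  unfolding meager_def using subset_trans by metis

lemma meager_empty: "meager {}"
  unfolding meager_def by (rule exI[of _ "{}"]) auto

lemma nowhere_dense_meager: "nowhere_dense N \<Longrightarrow> meager N"
  unfolding meager_def by (rule exI[of _ "{N}"]) auto

lemma meager_Union:
  assumes "countable \<M>" "\<And>M. M \<in> \<M> \<Longrightarrow> meager M"
  shows "meager (\<Union>\<M>)"
proof -
  from assms(2) have "\<forall>M\<in>\<M>. \<exists>F. countable F \<and> (\<forall>N\<in>F. nowhere_dense N) \<and> M \<subseteq> \<Union>F"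
    unfolding meager_def by blast
  then obtain F where F: "\<And>M. M \<in> \<M> \<Longrightarrow> countable (F M) \<and> (\<forall>N\<in>F M. nowhere_dense N) \<and> M \<subseteq> \<Union>(F M)"
    by metis
  show ?thesis unfolding meager_def
  proof (rule exI[of _ "\<Union>(F ` \<M>)"], intro conjI)
    show "countable (\<Union>(F ` \<M>))" using F assms(1) by (intro countable_UN) auto
    show "\<forall>N\<in>\<Union>(F ` \<M>). nowhere_dense N" using F by blast
    show "\<Union>\<M> \<subseteq> \<Union>(\<Union>(F ` \<M>))"
    proof
      fix x assume "x \<in> \<Union>\<M>"
      then obtain M where M: "M \<in> \<M>" "x \<in> M" by blast
      then have "x \<in> \<Union>(F M)" using F by blast
      then obtain N where "N \<in> F M" "x \<in> N" by blast
      then show "x \<in> \<Union>(\<Union>(F ` \<M>))" using M(1) by blast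
    qed
  qed
qed

lemma meager_UN:
  assumes "countable I" "\<And>i. i \<in> I \<Longrightarrow> meager (M i)"
  shows "meager (\<Union>i\<in>I. M i)"
  using meager_Union[of "M ` I"] assms by auto

lemma meager_Un: "meager A \<Longrightarrow> meager B \<Longrightarrow> meager (A \<union> B)"
  using meager_Union[of "{A,B}"] by auto

lemma nowhere_dense_closure: "nowhere_dense N \<Longrightarrow> nowhere_dense (closure N)"
  unfolding nowhere_dense_def by simp

lemma meager_closed_cover:
  assumes "meager M"
  obtains F where "countable F" "\<And>N. N \<in> F \<Longrightarrow> closed N \<and> nowhere_dense N" "M \<subseteq> \<Union>F"
proof -
  obtain F where F: "countable F" "\<forall>N\<in>F. nowhere_dense N" "M \<subseteq> \<Union>F"
    using assms unfolding meager_def by blast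
  show ?thesis
  proof (rule that[of "closure ` F"])
    show "countable (closure ` F)" using F by simp
    show "N \<in> closure ` F \<Longrightarrow> closed N \<and> nowhere_dense N" for N
      using F nowhere_dense_closure by auto
    show "M \<subseteq> \<Union>(closure ` F)" using F closure_subset by blast
  qed
qed

lemma nowhere_dense_frontier_closed:
  assumes "closed C" shows "nowhere_dense (C - interior C)"
proof -
  have cl: "closed (C - interior C)" using assms by (simp add: closed_Diff)
  have "interior (C - interior C) \<subseteq> interior C" by (simp add: interior_mono)
  moreover have "interior (C - interior C) \<subseteq> C - interior C" by (rule interior_subset)
  ultimately have "interior (C - interior C) = {}" by blast
  then show ?thesis unfolding nowhere_dense_def using cl closure_closed by metis
qed

lemma meager_countable_set:
  fixes S :: "'a::{t1_space,perfect_space} set"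
  assumes "countable S" shows "meager S"
proof -
  have "meager {x}" for x :: 'a
    unfolding meager_def
    by (rule exI[of _ "{{x}}"]) (auto simp: nowhere_dense_def)
  then have "meager (\<Union>x\<in>S. {x})" by (intro meager_UN assms)
  then show ?thesis by simp
qed

lemma meager_interior_empty:
  fixes M :: "'a::complete_space set"
  assumes "meager M" shows "interior M = {}"
proof -
  obtain F where F: "countable F" "\<And>N. N \<in> F \<Longrightarrow> closed N \<and> nowhere_dense N" "M \<subseteq> \<Union>F"
    using meager_closed_cover[OF assms] by blast
  have "euclidean interior_of \<Union>F = {}"
  proof (rule Baire_category_alt)
    show "\<And>T. T \<in> F \<Longrightarrow> closedin euclidean T \<and> euclidean interior_of T = {}"
      using F(2) unfolding nowhere_dense_def by (metis closed_closedin closure_closed euclidean_interior_of)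
  qed (use completely_metrizable_space_euclidean F(1) in auto)
  then have "interior (\<Union>F) = {}" by simp
  then show ?thesis using F(3) interior_mono by blast
qed

lemma open_not_meager:
  fixes U :: "'a::complete_space set"
  assumes "open U" "U \<noteq> {}" shows "\<not> meager U"
  using meager_interior_empty assms interior_open by fastforce

lemma Baire_property:
  fixes B :: "'a::topological_space set"
  assumes "B \<in> sets borel"
  shows "\<exists>U. open U \<and> meager ((B - U) \<union> (U - B))"
proof -
  have "B \<in> sigma_sets UNIV {S. open S}" using assms by (simp add: sets_borel)
  then show ?thesis
  proof (induction rule: sigma_sets.induct)
    case (Basic a) then show ?case by (intro exI[of _ a]) (auto simp: meager_empty)
  next
    case Empty then show ?case by (intro exI[of _ "{}"]) (auto simp: meager_empty)
  next
    case (Compl a)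
    then obtain U where U: "open U" "meager ((a - U) \<union> (U - a))" by blast
    let ?V = "interior (- U)"
    have "((UNIV - a) - ?V) \<union> (?V - (UNIV - a)) \<subseteq> ((a - U) \<union> (U - a)) \<union> ((-U) - interior (-U))"
      using interior_subset by blast
    moreover have "meager ((-U) - interior (-U))"
      unfolding meager_def
      by (rule exI[of _ "{(-U) - interior (-U)}"])
         (use nowhere_dense_frontier_closed[of "-U"] U(1) in auto)
    ultimately have "meager (((UNIV - a) - ?V) \<union> (?V - (UNIV - a)))"
      using U meager_Un[of "(a - U) \<union> (U - a)" "(-U) - interior (-U)"] meager_subset by blast
    then show ?case by (intro exI[of _ ?V]) simp
  next
    case (Union a)
    then obtain U where U: "\<And>i. open (U i) \<and> meager ((a i - U i) \<union> (U i - a i))" by metis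
    have "((\<Union>i. a i) - (\<Union>i. U i)) \<union> ((\<Union>i. U i) - (\<Union>i. a i)) \<subseteq> (\<Union>i. (a i - U i) \<union> (U i - a i))"
      by blast
    moreover have "meager (\<Union>i. (a i - U i) \<union> (U i - a i))"
      by (intro meager_UN) (use U in auto)
    ultimately have "meager (((\<Union>i. a i) - (\<Union>i. U i)) \<union> ((\<Union>i. U i) - (\<Union>i. a i)))"
      by (rule meager_subset[rotated])
    moreover have "open (\<Union>i. U i)" using U by auto
    ultimately show ?case by blast
  qed
qed



definition BB :: "real set set" where
  "BB = (SOME B. countable B \<and> topological_basis B)"

lemma BB: "countable BB" "topological_basis BB"
  using someI_ex[OF ex_countable_basis] unfolding BB_def by blast+

lemma BB_ne: "BB \<noteq> {}"
proof
  assume e: "BB = {}"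
  obtain B' where "B' \<subseteq> BB" "\<Union>B' = (UNIV::real set)"
    using BB(2) unfolding topological_basis_def by (metis open_UNIV)
  then show False using e by auto
qed

definition bas :: "nat \<Rightarrow> real set" where "bas k = from_nat_into BB k"

lemma bas_open: "open (bas k)"
  using BB(2) from_nat_into[OF BB_ne] unfolding bas_def topological_basis_def by blast

lemma bas_range: "range bas = BB"
  unfolding bas_def using range_from_nat_into[OF BB_ne BB(1)] by simp

lemma bas_sub:
  assumes "open U" "x \<in> U" obtains k where "x \<in> bas k" "bas k \<subseteq> U"
proof -
  obtain b where b: "b \<in> BB" "x \<in> b" "b \<subseteq> U" using topological_basisE[OF BB(2) assms] by blast
  then obtain k where "b = bas k" using bas_range by (metis rangeE)
  then show ?thesis using that b by simp
qed

definition opn :: "nat set \<Rightarrow> real set" where "opn S = (\<Union>k\<in>S. bas k)"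

lemma open_opn: "open (opn S)" unfolding opn_def using bas_open by auto

lemma open_eq_opn: assumes "open U" shows "\<exists>S. U = opn S"
proof -
  have "U = opn {k. bas k \<subseteq> U}"
  proof
    show "U \<subseteq> opn {k. bas k \<subseteq> U}"
    proof
      fix x assume "x \<in> U"
      then obtain k where "x \<in> bas k" "bas k \<subseteq> U" using bas_sub assms by metis
      then show "x \<in> opn {k. bas k \<subseteq> U}" unfolding opn_def by blast
    qed
  qed (auto simp: opn_def)
  then show ?thesis by blast
qed

definition gd :: "nat set \<Rightarrow> real set" where
  "gd S = (\<Inter>n. opn {k. prod_encode (n, k) \<in> S})"

lemma gd_surj:
  fixes T :: "nat \<Rightarrow> real set"
  assumes "\<And>n. open (T n)" shows "\<exists>S. gd S = (\<Inter>n. T n)"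
proof -
  have "\<forall>n. \<exists>S. T n = opn S" using open_eq_opn assms by blast
  then have "\<exists>SS. \<forall>n. T n = opn (SS n)" by (rule choice)
  then obtain SS where SS: "\<And>n. T n = opn (SS n)" by blast
  let ?S = "{prod_encode (n, k) | n k. k \<in> SS n}"
  have "{k. prod_encode (n, k) \<in> ?S} = SS n" for n
  proof (intro set_eqI iffI)
    fix x assume "x \<in> {k. prod_encode (n, k) \<in> ?S}"
    then obtain n' k' where "prod_encode (n, x) = prod_encode (n', k')" "k' \<in> SS n'" by auto
    then show "x \<in> SS n" using prod_encode_eq by (metis prod.inject)
  next
    fix x assume "x \<in> SS n" then show "x \<in> {k. prod_encode (n, k) \<in> ?S}" by auto
  qed
  then have "gd ?S = (\<Inter>n. T n)" unfolding gd_def using SS by simp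
  then show ?thesis by blast
qed

definition fnr :: "nat set \<Rightarrow> real" where "fnr = (SOME f. bij f)"
definition theta :: "real \<Rightarrow> nat set" where "theta = inv fnr"

lemma theta_surj: "\<exists>b. theta b = S"
proof -
  have "\<exists>f::nat set \<Rightarrow> real. bij f"
    using nat_sets_eqpoll_reals unfolding eqpoll_def by blast
  then have "bij fnr" unfolding fnr_def by (rule someI_ex)
  then have "theta (fnr S) = S" unfolding theta_def by (simp add: bij_is_inj)
  then show ?thesis by blast
qed

definition Cl :: "real \<Rightarrow> real set" where "Cl b = - opn (theta b)"
definition Gd :: "real \<Rightarrow> real set" where "Gd b = gd (theta b)"

lemma closed_Cl: "closed (Cl b)" unfolding Cl_def using open_opn by auto

lemma Cl_surj: assumes "closed K" shows "\<exists>b. Cl b = K"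
proof -
  obtain S where "-K = opn S" using open_eq_opn assms by (metis open_Compl)
  moreover obtain b where "theta b = S" using theta_surj by blast
  ultimately show ?thesis unfolding Cl_def by (metis double_complement)
qed

lemma Gd_surj: fixes T :: "nat \<Rightarrow> real set" assumes "\<And>n. open (T n)" shows "\<exists>b. Gd b = (\<Inter>n. T n)"
proof -
  from gd_surj[OF assms] obtain S where S: "gd S = (\<Inter>n. T n)" ..
  obtain b where "theta b = S" using theta_surj by blast
  then show ?thesis using S unfolding Gd_def by metis
qed

lemma null_cover:
  fixes N :: "real set"
  assumes "lnull N"
  shows "\<exists>T :: nat \<Rightarrow> real set. (\<forall>n. open (T n)) \<and> N \<subseteq> (\<Inter>n. T n) \<and> lnull (\<Inter>n. T n)"
proof -
  have Nl: "N \<in> sets lebesgue" using assms unfolding lnull_def by auto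
  obtain C T' where C: "gdelta C" "T' \<in> null_sets lebesgue" "N \<union> T' = C" "disjnt N T'"
    using lebesgue_set_almost_gdelta[OF Nl] by metis
  from C(1) have "\<exists>F. (\<forall>n::nat. open (F n)) \<and> C = (\<Inter>n. F n)"
    by (induction rule: gdelta.induct) auto
  then obtain F :: "nat \<Rightarrow> real set" where F0: "(\<forall>n. open (F n)) \<and> C = (\<Inter>n. F n)" ..
  then have F: "\<And>n. open (F n)" "C = (\<Inter>n. F n)" by auto
  have "lnull C" using C(2,3) assms unfolding lnull_def by (metis null_sets.Un)
  then show ?thesis using F C(3) by (intro exI[of _ F]) auto
qed

lemma Z_exists: "\<exists>Z::real set. lnull Z \<and> meager (- Z)"
proof -
  have "lnull (\<rat>::real set)"
    unfolding lnull_def by (intro null_sets_completionI countable_imp_null_set_lborel countable_rat)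
  from null_cover[OF this] obtain T :: "nat \<Rightarrow> real set"
    where T0: "(\<forall>n. open (T n)) \<and> \<rat> \<subseteq> (\<Inter>n. T n) \<and> lnull (\<Inter>n. T n)" ..
  then have T: "\<And>n. open (T n)" "\<rat> \<subseteq> (\<Inter>n. T n)" "lnull (\<Inter>n. T n)" by auto
  have nd: "nowhere_dense (- T n)" for n
  proof -
    have "interior (- T n) = {}"
    proof (rule ccontr)
      assume "interior (- T n) \<noteq> {}"
      then obtain x where x: "x \<in> interior (- T n)" by blast
      then obtain e where e: "e > 0" "ball x e \<subseteq> - T n"
        using open_contains_ball open_interior interior_subset by (metis subset_trans)
      obtain q where q: "q \<in> \<rat>" "x < q" "q < x + e" using Rats_dense_in_real[of x "x+e"] e(1) by auto
      have "q \<in> ball x e" using q by (auto simp: dist_real_def)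
      moreover have "q \<in> T n" using q(1) T(2) by blast
      ultimately show False using e(2) by blast
    qed
    then show ?thesis unfolding nowhere_dense_def using T(1) by (simp add: closed_Compl closure_closed)
  qed
  have "- (\<Inter>n. T n) = (\<Union>n. - T n)" by blast
  moreover have "meager (\<Union>n. - T n)"
    by (intro meager_UN) (auto intro: nowhere_dense_meager nd)
  ultimately show ?thesis using T(3) by metis
qed



lemma CH_order:
  assumes "CH"
  obtains r :: "real rel" where "Well_order r" "Field r = UNIV"
    "\<And>a. countable {b. (b, a) \<in> r}"
proof -
  let ?r = "card_of (UNIV :: real set)"
  have WO: "Well_order ?r" using card_of_Card_order unfolding card_order_on_def by blast
  have F: "Field ?r = UNIV" by (simp add: Field_card_of)
  have "countable {b. (b, a) \<in> ?r}" for a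
  proof -
    have less: "ordLess2 (card_of (underS ?r a)) ?r"
      by (rule card_of_underS[OF card_of_Card_order]) (simp add: F)
    have "countable (underS ?r a)"
    proof (rule ccontr)
      assume "uncountable (underS ?r a)"
      then have "underS ?r a \<approx> (UNIV::real set)" using assms unfolding CH_def by blast
      then have "ordIso2 (card_of (underS ?r a)) ?r" using eqpoll_iff_card_of_ordIso by blast
      then show False using less not_ordLess_ordIso by blast
    qed
    moreover have "{b. (b, a) \<in> ?r} \<subseteq> insert a (underS ?r a)"
      by (auto simp: underS_def)
    ultimately show ?thesis using countable_subset by (metis countable_insert)
  qed
  then show ?thesis using that WO F by blast
qed



lemma lnull_subset: "lnull B \<Longrightarrow> A \<subseteq> B \<Longrightarrow> lnull A"
  unfolding lnull_def using null_sets_completion_subset by blast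

lemma lnull_countable: "countable (A::real set) \<Longrightarrow> lnull A"
  unfolding lnull_def by (intro null_sets_completionI countable_imp_null_set_lborel)

lemma not_lnull_UNIV: "\<not> lnull (UNIV::real set)"
proof
  assume "lnull (UNIV::real set)"
  then have "UNIV \<in> null_sets (lborel :: real measure)"
    unfolding lnull_def by (subst (asm) null_sets_completion_iff) auto
  then show False by auto
qed

locale chord =
  fixes r :: "real rel"
  assumes WO: "Well_order r" and FU: "Field r = UNIV"
    and CI: "\<And>a. countable {b. (b, a) \<in> r}"
begin

lemma rrefl: "(a, a) \<in> r"
  using WO FU unfolding well_order_on_def linear_order_on_def partial_order_on_def
    preorder_on_def refl_on_def by auto

lemma rtrans: "(a, b) \<in> r \<Longrightarrow> (b, c) \<in> r \<Longrightarrow> (a, c) \<in> r"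
  using WO unfolding well_order_on_def linear_order_on_def partial_order_on_def
    preorder_on_def trans_def by blast

lemma rtotal: "(a, b) \<in> r \<or> (b, a) \<in> r"
  using WO FU rrefl unfolding well_order_on_def linear_order_on_def total_on_def
  by (metis UNIV_I)

lemma rbound: assumes "countable S" shows "\<exists>a. \<forall>s\<in>S. (s, a) \<in> r"
proof -
  have "countable (\<Union>s\<in>S. {b. (b, s) \<in> r})" using assms CI by auto
  then obtain a where a: "a \<notin> (\<Union>s\<in>S. {b. (b, s) \<in> r})"
    using uncountable_UNIV_real by (metis UNIV_I countable_subset subsetI)
  have "(s, a) \<in> r" if "s \<in> S" for s using a that rtotal by blast
  then show ?thesis by blast
qed

lemma rbound3: "\<exists>a. (x, a) \<in> r \<and> (y, a) \<in> r \<and> (z, a) \<in> r"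
  using rbound[of "{x, y, z}"] by auto

definition Mst :: "real \<Rightarrow> real set" where
  "Mst a = (\<Union>b\<in>{b. (b, a) \<in> r \<and> nowhere_dense (Cl b)}. Cl b)"

definition Nst :: "real \<Rightarrow> real set" where
  "Nst a = (\<Union>b\<in>{b. (b, a) \<in> r \<and> lnull (Gd b)}. Gd b)"

lemma Mst_meager: "meager (Mst a)"
  unfolding Mst_def
  by (intro meager_UN) (auto intro: nowhere_dense_meager countable_subset[OF _ CI[of a]])

lemma Nst_null: "lnull (Nst a)"
  unfolding Nst_def lnull_def
  by (intro null_sets_UN') (auto intro: countable_subset[OF _ CI[of a]] simp: lnull_def)

lemma Mst_mono: "(c, a) \<in> r \<Longrightarrow> Mst c \<subseteq> Mst a"
  unfolding Mst_def using rtrans by blast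

lemma Nst_mono: "(c, a) \<in> r \<Longrightarrow> Nst c \<subseteq> Nst a"
  unfolding Nst_def using rtrans by blast

lemma Mst_cover: assumes "meager M" shows "\<exists>c. M \<subseteq> Mst c"
proof -
  obtain F where F: "countable F" "\<And>N. N \<in> F \<Longrightarrow> closed N \<and> nowhere_dense N" "M \<subseteq> \<Union>F"
    using meager_closed_cover[OF assms] by blast
  have "\<forall>N\<in>F. \<exists>b. Cl b = N" using F(2) Cl_surj by blast
  then obtain g where g: "\<And>N. N \<in> F \<Longrightarrow> Cl (g N) = N" by metis
  have "countable (g ` F)" using F(1) by simp
  from rbound[OF this] obtain c where c: "\<forall>s\<in>g ` F. (s, c) \<in> r" ..
  have "N \<subseteq> Mst c" if "N \<in> F" for N
  proof -
    have "g N \<in> {b. (b, c) \<in> r \<and> nowhere_dense (Cl b)}" using c g F(2) that by auto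
    then have "Cl (g N) \<subseteq> Mst c" unfolding Mst_def by blast
    then show ?thesis using g that by simp
  qed
  then show ?thesis using F(3) by blast
qed

lemma Nst_cover: assumes "lnull N" shows "\<exists>c. N \<subseteq> Nst c"
proof -
  from null_cover[OF assms] obtain T :: "nat \<Rightarrow> real set"
    where T0: "(\<forall>n. open (T n)) \<and> N \<subseteq> (\<Inter>n. T n) \<and> lnull (\<Inter>n. T n)" ..
  then have T: "\<And>n. open (T n)" "N \<subseteq> (\<Inter>n. T n)" "lnull (\<Inter>n. T n)" by auto
  from Gd_surj[OF T(1)] obtain b where b: "Gd b = (\<Inter>n. T n)" ..
  have "b \<in> {c. (c, b) \<in> r \<and> lnull (Gd c)}" using b T(3) rrefl by simp
  then have "Gd b \<subseteq> Nst b" unfolding Nst_def by blast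
  then have "N \<subseteq> Nst b" using T(2) b by (metis subset_trans)
  then show ?thesis ..
qed

definition xR :: "real \<Rightarrow> nat \<Rightarrow> real" where
  "xR a k = (SOME x. x \<in> bas k \<and> x \<notin> Mst a)"

definition yS :: "real \<Rightarrow> real \<Rightarrow> real" where
  "yS a c = (SOME y. y \<in> Cl c \<and> y \<notin> Nst a)"

lemma xR: assumes "bas k \<noteq> {}" shows "xR a k \<in> bas k" "xR a k \<notin> Mst a"
proof -
  have "\<exists>x. x \<in> bas k \<and> x \<notin> Mst a"
  proof (rule ccontr)
    assume "\<not> ?thesis"
    then have "bas k \<subseteq> Mst a" by blast
    then have "meager (bas k)" using Mst_meager meager_subset by blast
    then show False using open_not_meager[OF bas_open assms] by simp
  qed
  then show "xR a k \<in> bas k" "xR a k \<notin> Mst a" unfolding xR_def by (metis (mono_tags, lifting) someI_ex)+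
qed

lemma yS: assumes "\<not> lnull (Cl c)" shows "yS a c \<in> Cl c" "yS a c \<notin> Nst a"
proof -
  have "\<exists>y. y \<in> Cl c \<and> y \<notin> Nst a"
  proof (rule ccontr)
    assume "\<not> ?thesis"
    then have "Cl c \<subseteq> Nst a" by blast
    then show False using Nst_null lnull_subset assms by blast
  qed
  then show "yS a c \<in> Cl c" "yS a c \<notin> Nst a" unfolding yS_def by (metis (mono_tags, lifting) someI_ex)+
qed

definition AA :: "(real \<times> real) set" where
  "AA = {(xR a k, y) | a k y. (y, a) \<in> r \<and> bas k \<noteq> {}}
      \<union> {(x, yS a c) | a c x. (x, a) \<in> r \<and> (c, a) \<in> r \<and> \<not> lnull (Cl c)}"

end


context chord begin

lemma row_countable:
  assumes "meager M" shows "countable ({x. (x, y) \<in> AA} \<inter> M)"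
proof -
  obtain g where g: "M \<subseteq> Mst g" using Mst_cover[OF assms] by blast
  have "lnull {y}" by (rule lnull_countable) simp
  then obtain p where p: "{y} \<subseteq> Nst p" using Nst_cover by blast
  let ?S1 = "(\<lambda>(a, k). xR a k) ` ({a. (a, g) \<in> r} \<times> (UNIV::nat set))"
  let ?S2 = "\<Union>a\<in>{a. (a, p) \<in> r}. {x. (x, a) \<in> r}"
  have "{x. (x, y) \<in> AA} \<inter> M \<subseteq> ?S1 \<union> ?S2"
  proof
    fix x assume x: "x \<in> {x. (x, y) \<in> AA} \<inter> M"
    then have xm: "x \<in> Mst g" using g by blast
    from x have "(x, y) \<in> AA" by simp
    then consider (A) a k where "x = xR a k" "(y, a) \<in> r" "bas k \<noteq> {}"
      | (B) a c where "y = yS a c" "(x, a) \<in> r" "(c, a) \<in> r" "\<not> lnull (Cl c)"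
      unfolding AA_def by blast
    then show "x \<in> ?S1 \<union> ?S2"
    proof cases
      case A
      have "(g, a) \<notin> r" using xR(2)[OF A(3), of a] A(1) xm Mst_mono by blast
      then have "(a, g) \<in> r" using rtotal by blast
      then show ?thesis using A(1) by blast
    next
      case B
      have "(p, a) \<notin> r" using yS(2)[OF B(4), of a] B(1) p Nst_mono by blast
      then have "(a, p) \<in> r" using rtotal by blast
      then show ?thesis using B(2) by blast
    qed
  qed
  moreover have "countable ?S1" using CI by simp
  moreover have "countable ?S2" using CI by simp
  ultimately show ?thesis by (meson countable_Un countable_subset)
qed

lemma col_countable:
  assumes "lnull N" shows "countable ({y. (x, y) \<in> AA} \<inter> N)"
proof -
  obtain g where g: "N \<subseteq> Nst g" using Nst_cover[OF assms] by blast
  have "meager {x}" by (rule meager_countable_set) simp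
  then obtain p where p: "{x} \<subseteq> Mst p" using Mst_cover by blast
  let ?S1 = "(\<lambda>(a, c). yS a c) ` ({a. (a, g) \<in> r} \<times> {a. (a, g) \<in> r})"
  let ?S2 = "\<Union>a\<in>{a. (a, p) \<in> r}. {y. (y, a) \<in> r}"
  have "{y. (x, y) \<in> AA} \<inter> N \<subseteq> ?S1 \<union> ?S2"
  proof
    fix y assume y: "y \<in> {y. (x, y) \<in> AA} \<inter> N"
    then have yn: "y \<in> Nst g" using g by blast
    from y have "(x, y) \<in> AA" by simp
    then consider (A) a k where "x = xR a k" "(y, a) \<in> r" "bas k \<noteq> {}"
      | (B) a c where "y = yS a c" "(x, a) \<in> r" "(c, a) \<in> r" "\<not> lnull (Cl c)"
      unfolding AA_def by blast
    then show "y \<in> ?S1 \<union> ?S2"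
    proof cases
      case A
      have "(p, a) \<notin> r" using xR(2)[OF A(3), of a] A(1) p Mst_mono by blast
      then have "(a, p) \<in> r" using rtotal by blast
      then show ?thesis using A(2) by blast
    next
      case B
      have "(g, a) \<notin> r" using yS(2)[OF B(4), of a] B(1) yn Nst_mono by blast
      then have ag: "(a, g) \<in> r" using rtotal by blast
      then have "(c, g) \<in> r" using B(3) rtrans by blast
      then show ?thesis using B(1) ag by blast
    qed
  qed
  moreover have "countable ?S1" using CI by simp
  moreover have "countable ?S2" using CI by simp
  ultimately show ?thesis by (meson countable_Un countable_subset)
qed

end


lemma fsigma_ex: "fsigma (C::'a::topological_space set) \<Longrightarrow> \<exists>F. (\<forall>n::nat. closed (F n)) \<and> C = (\<Union>n. F n)"
  by (induction rule: fsigma.induct) auto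

context chord begin

lemma row_dense:
  assumes B: "B \<in> sets borel" "\<not> meager B" shows "uncountable ({x. (x, y) \<in> AA} \<inter> B)"
proof
  assume cX: "countable ({x. (x, y) \<in> AA} \<inter> B)"
  let ?X = "{x. (x, y) \<in> AA} \<inter> B"
  obtain U where U: "open U" "meager ((B - U) \<union> (U - B))" using Baire_property[OF B(1)] by blast
  have "U \<noteq> {}"
  proof
    assume "U = {}"
    then have "B \<subseteq> (B - U) \<union> (U - B)" by blast
    then show False using U(2) B(2) meager_subset by blast
  qed
  then obtain u where "u \<in> U" by blast
  then obtain k where k: "u \<in> bas k" "bas k \<subseteq> U" using bas_sub U(1) by metis
  have "meager ?X" using cX by (rule meager_countable_set)
  then have "meager (((B - U) \<union> (U - B)) \<union> ?X)" using U(2) meager_Un by blast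
  then obtain d where d: "((B - U) \<union> (U - B)) \<union> ?X \<subseteq> Mst d" using Mst_cover by blast
  obtain a where a: "(d, a) \<in> r" "(y, a) \<in> r" using rbound3[of d y y] by blast
  have kne: "bas k \<noteq> {}" using k by blast
  let ?x = "xR a k"
  have x1: "?x \<in> U" using xR(1)[OF kne] k by blast
  have x2: "?x \<notin> Mst d" using xR(2)[OF kne, of a] Mst_mono[OF a(1)] by blast
  have x3: "?x \<in> B" using x1 x2 d by blast
  have "(?x, y) \<in> AA" unfolding AA_def using a(2) kne by blast
  then have "?x \<in> ?X" using x3 by blast
  then show False using x2 d by blast
qed

lemma col_dense:
  assumes B: "B \<in> sets borel" "\<not> lnull B" shows "uncountable ({y. (x, y) \<in> AA} \<inter> B)"
proof
  assume cX: "countable ({y. (x, y) \<in> AA} \<inter> B)"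
  let ?X = "{y. (x, y) \<in> AA} \<inter> B"
  have Bl: "B \<in> sets lebesgue" using B(1) by simp
  obtain C T where CT: "fsigma C" "T \<in> null_sets lebesgue" "C \<union> T = B"
    using lebesgue_set_almost_fsigma[OF Bl] by metis
  from fsigma_ex[OF CT(1)] obtain F :: "nat \<Rightarrow> real set" where F0: "(\<forall>n. closed (F n)) \<and> C = (\<Union>n. F n)" ..
  have "\<exists>n. \<not> lnull (F n)"
  proof (rule ccontr)
    assume "\<not> ?thesis"
    then have "lnull (\<Union>n. F n)" unfolding lnull_def by auto
    then have "lnull B" using CT(2,3) F0 unfolding lnull_def by (metis null_sets.Un)
    then show False using B(2) by blast
  qed
  then obtain n where n: "\<not> lnull (F n)" by blast
  obtain c where c: "Cl c = F n" using Cl_surj F0 by blast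
  have FB: "F n \<subseteq> B" using F0 CT(3) by blast
  have "lnull ?X" using cX by (rule lnull_countable)
  then obtain d where d: "?X \<subseteq> Nst d" using Nst_cover by blast
  obtain a where a: "(d, a) \<in> r" "(x, a) \<in> r" "(c, a) \<in> r" using rbound3 by blast
  have cn: "\<not> lnull (Cl c)" using c n by simp
  let ?y = "yS a c"
  have y1: "?y \<in> B" using yS(1)[OF cn] c FB by blast
  have y2: "?y \<notin> Nst d" using yS(2)[OF cn, of a] Nst_mono[OF a(1)] by blast
  have "(x, ?y) \<in> AA" unfolding AA_def using a(2,3) cn by blast
  then have "?y \<in> ?X" using y1 by blast
  then show False using y2 d by blast
qed

end


lemma closed_slice_col: "closed (C::(real\<times>real) set) \<Longrightarrow> closed {y. (x, y) \<in> C}"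
proof -
  assume "closed C"
  moreover have "\<And>y. continuous (at y) (\<lambda>y::real. (x, y))" by (intro continuous_intros)
  ultimately have "closed ((\<lambda>y::real. (x, y)) -` C)" by (rule continuous_closed_vimage)
  moreover have "{y. (x, y) \<in> C} = (\<lambda>y::real. (x, y)) -` C" by auto
  ultimately show ?thesis by simp
qed

lemma closed_slice_row: "closed (C::(real\<times>real) set) \<Longrightarrow> closed {x. (x, y) \<in> C}"
proof -
  assume "closed C"
  moreover have "\<And>x. continuous (at x) (\<lambda>x::real. (x, y))" by (intro continuous_intros)
  ultimately have "closed ((\<lambda>x::real. (x, y)) -` C)" by (rule continuous_closed_vimage)
  moreover have "{x. (x, y) \<in> C} = (\<lambda>x::real. (x, y)) -` C" by auto
  ultimately show ?thesis by simp
qed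

lemma KU_col_closed:
  fixes C :: "(real \<times> real) set"
  assumes C: "closed C" "nowhere_dense C"
  shows "meager {x. \<not> nowhere_dense {y. (x, y) \<in> C}}"
proof -
  let ?P = "\<lambda>k. {x. bas k \<subseteq> {y. (x, y) \<in> C}}"
  have ndP: "nowhere_dense (?P k)" if kne: "bas k \<noteq> {}" for k
  proof -
    have "?P k = (\<Inter>y\<in>bas k. {x. (x, y) \<in> C})" by auto
    then have clP: "closed (?P k)" using closed_slice_row[OF C(1)] by (metis closed_INT)
    have "interior (?P k) = {}"
    proof (rule ccontr)
      assume "interior (?P k) \<noteq> {}"
      then obtain x0 where x0: "x0 \<in> interior (?P k)" by blast
      obtain y0 where y0: "y0 \<in> bas k" using kne by blast
      have sub: "interior (?P k) \<times> bas k \<subseteq> C"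
      proof
        fix p assume "p \<in> interior (?P k) \<times> bas k"
        then obtain a b where p: "p = (a, b)" "a \<in> interior (?P k)" "b \<in> bas k" by blast
        then have "a \<in> ?P k" using interior_subset by blast
        then show "p \<in> C" using p by blast
      qed
      have "open (interior (?P k) \<times> bas k)" using bas_open by (intro open_Times) auto
      then have "interior (?P k) \<times> bas k \<subseteq> interior C" by (rule interior_maximal[OF sub])
      moreover have "interior C = {}" using C unfolding nowhere_dense_def by (simp add: closure_closed)
      moreover have "(x0, y0) \<in> interior (?P k) \<times> bas k" using x0 y0 by blast
      ultimately show False by blast
    qed
    then show ?thesis unfolding nowhere_dense_def using clP by (simp add: closure_closed)
  qed
  have "{x. \<not> nowhere_dense {y. (x, y) \<in> C}} \<subseteq> (\<Union>k\<in>{k. bas k \<noteq> {}}. ?P k)"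
  proof
    fix x assume "x \<in> {x. \<not> nowhere_dense {y. (x, y) \<in> C}}"
    then have "interior {y. (x, y) \<in> C} \<noteq> {}"
      unfolding nowhere_dense_def using closed_slice_col[OF C(1)] by (simp add: closure_closed)
    then obtain y where y: "y \<in> interior {y. (x, y) \<in> C}" by blast
    obtain k where k: "y \<in> bas k" "bas k \<subseteq> interior {y. (x, y) \<in> C}"
      using bas_sub[OF open_interior y] by metis
    then have "bas k \<subseteq> {y. (x, y) \<in> C}" using interior_subset by blast
    then show "x \<in> (\<Union>k\<in>{k. bas k \<noteq> {}}. ?P k)" using k(1) by blast
  qed
  moreover have "meager (\<Union>k\<in>{k. bas k \<noteq> {}}. ?P k)"
    by (intro meager_UN) (auto intro: nowhere_dense_meager ndP)
  ultimately show ?thesis by (rule meager_subset[rotated])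
qed

lemma KU_row_closed:
  fixes C :: "(real \<times> real) set"
  assumes C: "closed C" "nowhere_dense C"
  shows "meager {y. \<not> nowhere_dense {x. (x, y) \<in> C}}"
proof -
  let ?P = "\<lambda>k. {y. bas k \<subseteq> {x. (x, y) \<in> C}}"
  have ndP: "nowhere_dense (?P k)" if kne: "bas k \<noteq> {}" for k
  proof -
    have "?P k = (\<Inter>x\<in>bas k. {y. (x, y) \<in> C})" by auto
    then have clP: "closed (?P k)" using closed_slice_col[OF C(1)] by (metis closed_INT)
    have "interior (?P k) = {}"
    proof (rule ccontr)
      assume "interior (?P k) \<noteq> {}"
      then obtain x0 where x0: "x0 \<in> interior (?P k)" by blast
      obtain y0 where y0: "y0 \<in> bas k" using kne by blast
      have sub: "bas k \<times> interior (?P k) \<subseteq> C"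
      proof
        fix p assume "p \<in> bas k \<times> interior (?P k)"
        then obtain a b where p: "p = (a, b)" "b \<in> interior (?P k)" "a \<in> bas k" by blast
        then have "b \<in> ?P k" using interior_subset by blast
        then show "p \<in> C" using p by blast
      qed
      have "open (bas k \<times> interior (?P k))" using bas_open by (intro open_Times) auto
      then have "bas k \<times> interior (?P k) \<subseteq> interior C" by (rule interior_maximal[OF sub])
      moreover have "interior C = {}" using C unfolding nowhere_dense_def by (simp add: closure_closed)
      moreover have "(y0, x0) \<in> bas k \<times> interior (?P k)" using x0 y0 by blast
      ultimately show False by blast
    qed
    then show ?thesis unfolding nowhere_dense_def using clP by (simp add: closure_closed)
  qed
  have "{y. \<not> nowhere_dense {x. (x, y) \<in> C}} \<subseteq> (\<Union>k\<in>{k. bas k \<noteq> {}}. ?P k)"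
  proof
    fix y assume "y \<in> {y. \<not> nowhere_dense {x. (x, y) \<in> C}}"
    then have "interior {x. (x, y) \<in> C} \<noteq> {}"
      unfolding nowhere_dense_def using closed_slice_row[OF C(1)] by (simp add: closure_closed)
    then obtain x where x: "x \<in> interior {x. (x, y) \<in> C}" by blast
    obtain k where k: "x \<in> bas k" "bas k \<subseteq> interior {x. (x, y) \<in> C}"
      using bas_sub[OF open_interior x] by metis
    then have "bas k \<subseteq> {x. (x, y) \<in> C}" using interior_subset by blast
    then show "y \<in> (\<Union>k\<in>{k. bas k \<noteq> {}}. ?P k)" using k(1) by blast
  qed
  moreover have "meager (\<Union>k\<in>{k. bas k \<noteq> {}}. ?P k)"
    by (intro meager_UN) (auto intro: nowhere_dense_meager ndP)
  ultimately show ?thesis by (rule meager_subset[rotated])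
qed

lemma KU_col:
  fixes F :: "(real \<times> real) set"
  assumes "meager F" shows "meager {x. \<not> meager {y. (x, y) \<in> F}}"
proof -
  obtain \<F> where F: "countable \<F>" "\<And>N. N \<in> \<F> \<Longrightarrow> closed N \<and> nowhere_dense N" "F \<subseteq> \<Union>\<F>"
    using meager_closed_cover[OF assms] by blast
  have "{x. \<not> meager {y. (x, y) \<in> F}} \<subseteq> (\<Union>C\<in>\<F>. {x. \<not> nowhere_dense {y. (x, y) \<in> C}})"
  proof
    fix x assume x: "x \<in> {x. \<not> meager {y. (x, y) \<in> F}}"
    show "x \<in> (\<Union>C\<in>\<F>. {x. \<not> nowhere_dense {y. (x, y) \<in> C}})"
    proof (rule ccontr)
      assume "\<not> ?thesis"
      then have nd: "\<And>C. C \<in> \<F> \<Longrightarrow> nowhere_dense {y. (x, y) \<in> C}" by blast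
      have "meager (\<Union>C\<in>\<F>. {y. (x, y) \<in> C})"
        using F(1) nd by (intro meager_UN) (auto intro: nowhere_dense_meager)
      moreover have "{y. (x, y) \<in> F} \<subseteq> (\<Union>C\<in>\<F>. {y. (x, y) \<in> C})" using F(3) by blast
      ultimately show False using x meager_subset by blast
    qed
  qed
  moreover have "meager (\<Union>C\<in>\<F>. {x. \<not> nowhere_dense {y. (x, y) \<in> C}})"
    using F(1,2) KU_col_closed by (intro meager_UN) auto
  ultimately show ?thesis by (rule meager_subset[rotated])
qed

lemma KU_row:
  fixes F :: "(real \<times> real) set"
  assumes "meager F" shows "meager {y. \<not> meager {x. (x, y) \<in> F}}"
proof -
  obtain \<F> where F: "countable \<F>" "\<And>N. N \<in> \<F> \<Longrightarrow> closed N \<and> nowhere_dense N" "F \<subseteq> \<Union>\<F>"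
    using meager_closed_cover[OF assms] by blast
  have "{y. \<not> meager {x. (x, y) \<in> F}} \<subseteq> (\<Union>C\<in>\<F>. {y. \<not> nowhere_dense {x. (x, y) \<in> C}})"
  proof
    fix y assume y: "y \<in> {y. \<not> meager {x. (x, y) \<in> F}}"
    show "y \<in> (\<Union>C\<in>\<F>. {y. \<not> nowhere_dense {x. (x, y) \<in> C}})"
    proof (rule ccontr)
      assume "\<not> ?thesis"
      then have nd: "\<And>C. C \<in> \<F> \<Longrightarrow> nowhere_dense {x. (x, y) \<in> C}" by blast
      have "meager (\<Union>C\<in>\<F>. {x. (x, y) \<in> C})"
        using F(1) nd by (intro meager_UN) (auto intro: nowhere_dense_meager)
      moreover have "{x. (x, y) \<in> F} \<subseteq> (\<Union>C\<in>\<F>. {x. (x, y) \<in> C})" using F(3) by blast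
      ultimately show False using y meager_subset by blast
    qed
  qed
  moreover have "meager (\<Union>C\<in>\<F>. {y. \<not> nowhere_dense {x. (x, y) \<in> C}})"
    using F(1,2) KU_row_closed by (intro meager_UN) auto
  ultimately show ?thesis by (rule meager_subset[rotated])
qed



lemma slice_col_borel:
  fixes D :: "(real \<times> real) set"
  assumes "D \<in> sets borel" shows "{y. (x, y) \<in> D} \<in> sets borel"
proof -
  have "D \<in> sets (lborel \<Otimes>\<^sub>M lborel)" using assms by (subst lborel_prod) simp
  then have "Pair x -` D \<in> sets lborel" by (rule sets_Pair1)
  moreover have "{y. (x, y) \<in> D} = Pair x -` D" by auto
  ultimately show ?thesis by simp
qed

lemma slice_row_borel:
  fixes D :: "(real \<times> real) set"
  assumes "D \<in> sets borel" shows "{x. (x, y) \<in> D} \<in> sets borel"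
proof -
  have D: "D \<in> sets (lborel \<Otimes>\<^sub>M lborel)" using assms by (subst lborel_prod) simp
  have "(\<lambda>x. (x, y)) \<in> measurable lborel (lborel \<Otimes>\<^sub>M (lborel::real measure))" by measurable
  then have "(\<lambda>x. (x, y)) -` D \<inter> space lborel \<in> sets lborel" using D by (rule measurable_sets)
  moreover have "{x. (x, y) \<in> D} = (\<lambda>x. (x, y)) -` D \<inter> space lborel" by auto
  ultimately show ?thesis by simp
qed

lemma borel_not_lnull_emeasure:
  fixes D :: "'a::euclidean_space set"
  assumes "D \<in> sets borel" "\<not> lnull D" shows "emeasure lborel D \<noteq> 0"
proof
  assume "emeasure lborel D = 0"
  then have "D \<in> null_sets lborel" using assms(1) by auto
  then show False using assms(2) unfolding lnull_def by (metis null_sets_completionI)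
qed

lemma borel_emeasure_not_lnull:
  fixes D :: "'a::euclidean_space set"
  assumes "D \<in> sets borel" "emeasure lborel D \<noteq> 0" shows "\<not> lnull D"
proof
  assume "lnull D"
  then have "D \<in> null_sets lborel" unfolding lnull_def using assms(1)
    by (subst (asm) null_sets_completion_iff) auto
  then show False using assms(2) by auto
qed

lemma fubini_col:
  fixes D :: "(real \<times> real) set"
  assumes "D \<in> sets borel" "\<not> lnull D" shows "\<exists>x. \<not> lnull {y. (x, y) \<in> D}"
proof (rule ccontr)
  assume "\<not> ?thesis"
  then have z: "\<And>x. lnull {y. (x, y) \<in> D}" by blast
  have D: "D \<in> sets (lborel \<Otimes>\<^sub>M lborel)" using assms by (subst lborel_prod) simp
  have "emeasure lborel (Pair x -` D) = 0" for x
  proof -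
    have "{y. (x, y) \<in> D} = Pair x -` D" by auto
    then show ?thesis using z[of x] slice_col_borel[OF assms(1), of x] borel_emeasure_not_lnull by metis
  qed
  then have "emeasure (lborel \<Otimes>\<^sub>M lborel) D = 0"
    using lborel.emeasure_pair_measure_alt[OF D] by simp
  then have "emeasure lborel D = 0" by (simp add: lborel_prod)
  then show False using borel_not_lnull_emeasure assms by blast
qed

lemma fubini_row:
  fixes D :: "(real \<times> real) set"
  assumes "D \<in> sets borel" "\<not> lnull D" shows "\<exists>y. \<not> lnull {x. (x, y) \<in> D}"
proof (rule ccontr)
  assume "\<not> ?thesis"
  then have z: "\<And>y. lnull {x. (x, y) \<in> D}" by blast
  have D: "D \<in> sets (lborel \<Otimes>\<^sub>M lborel)" using assms by (subst lborel_prod) simp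
  have "emeasure lborel ((\<lambda>x. (x, y)) -` D) = 0" for y
  proof -
    have "{x. (x, y) \<in> D} = (\<lambda>x. (x, y)) -` D" by auto
    then show ?thesis using z[of y] slice_row_borel[OF assms(1), of y] borel_emeasure_not_lnull by metis
  qed
  then have "emeasure (lborel \<Otimes>\<^sub>M lborel) D = 0"
    using lborel_pair.emeasure_pair_measure_alt2[OF D] by simp
  then have "emeasure lborel D = 0" by (simp add: lborel_prod)
  then show False using borel_not_lnull_emeasure assms by blast
qed



lemma twoD_meager:
  fixes A :: "(real \<times> real) set"
  assumes rows: "\<And>y. strong_luzin_set {x. (x, y) \<in> A}"
    and cols: "\<And>x. strong_sierpinski_set {y. (x, y) \<in> A}"
  shows "completely_nonmeasurable meager A"
  unfolding completely_nonmeasurable_def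
proof (intro ballI impI conjI)
  fix B :: "(real \<times> real) set" assume B: "B \<in> sets borel" "\<not> meager B"
  obtain U where U: "open U" "meager ((B - U) \<union> (U - B))" using Baire_property[OF B(1)] by blast
  let ?F = "(B - U) \<union> (U - B)"
  have "U \<noteq> {}"
  proof
    assume "U = {}"
    then have "B \<subseteq> ?F" by blast
    then show False using U(2) B(2) meager_subset by blast
  qed
  then obtain p where "p \<in> U" by blast
  then obtain I J where IJ: "open I" "open J" "p \<in> I \<times> J" "I \<times> J \<subseteq> U"
    using open_prod_elim[OF U(1)] by metis
  have Ine: "I \<noteq> {}" and Jne: "J \<noteq> {}" using IJ(3) by auto
  show "A \<inter> B \<noteq> {}"
  proof -
    have "\<not> J \<subseteq> {y. \<not> meager {x. (x, y) \<in> ?F}}"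
      using KU_row[OF U(2)] open_not_meager[OF IJ(2) Jne] meager_subset by blast
    then obtain y where y: "y \<in> J" "meager {x. (x, y) \<in> ?F}" by blast
    have "I \<subseteq> {x. (x, y) \<in> B} \<union> {x. (x, y) \<in> ?F}" using IJ(4) y(1) by blast
    then have nm: "\<not> meager {x. (x, y) \<in> B}"
      using y(2) open_not_meager[OF IJ(1) Ine] meager_Un meager_subset by blast
    have "uncountable ({x. (x, y) \<in> A} \<inter> {x. (x, y) \<in> B})"
      using rows[of y] slice_row_borel[OF B(1)] nm unfolding strong_luzin_set_def by blast
    then have "{x. (x, y) \<in> A} \<inter> {x. (x, y) \<in> B} \<noteq> {}" by (metis countable_empty)
    then show ?thesis by blast
  qed
  show "\<not> B \<subseteq> A"
  proof
    assume BA: "B \<subseteq> A"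
    have "\<not> I \<subseteq> {x. \<not> meager {y. (x, y) \<in> ?F}}"
      using KU_col[OF U(2)] open_not_meager[OF IJ(1) Ine] meager_subset by blast
    then obtain x where x: "x \<in> I" "meager {y. (x, y) \<in> ?F}" by blast
    have "J \<subseteq> {y. (x, y) \<in> B} \<union> {y. (x, y) \<in> ?F}" using IJ(4) x(1) by blast
    then have nm: "\<not> meager {y. (x, y) \<in> B}"
      using x(2) open_not_meager[OF IJ(2) Jne] meager_Un meager_subset by blast
    obtain Z :: "real set" where Z: "lnull Z" "meager (- Z)" using Z_exists by blast
    have "countable ({y. (x, y) \<in> A} \<inter> Z)"
      using cols[of x] Z(1) unfolding strong_sierpinski_set_def sierpinski_set_def by blast
    then have "meager ({y. (x, y) \<in> A} \<inter> Z)" by (rule meager_countable_set)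
    then have "meager (({y. (x, y) \<in> A} \<inter> Z) \<union> - Z)" using Z(2) by (rule meager_Un)
    moreover have "{y. (x, y) \<in> B} \<subseteq> ({y. (x, y) \<in> A} \<inter> Z) \<union> - Z" using BA by blast
    ultimately show False using nm meager_subset by blast
  qed
qed

lemma twoD_null:
  fixes A :: "(real \<times> real) set"
  assumes rows: "\<And>y. strong_luzin_set {x. (x, y) \<in> A}"
    and cols: "\<And>x. strong_sierpinski_set {y. (x, y) \<in> A}"
  shows "completely_nonmeasurable lnull A"
  unfolding completely_nonmeasurable_def
proof (intro ballI impI conjI)
  fix B :: "(real \<times> real) set" assume B: "B \<in> sets borel" "\<not> lnull B"
  show "A \<inter> B \<noteq> {}"
  proof -
    obtain x where x: "\<not> lnull {y. (x, y) \<in> B}" using fubini_col[OF B] by blast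
    have "uncountable ({y. (x, y) \<in> A} \<inter> {y. (x, y) \<in> B})"
      using cols[of x] slice_col_borel[OF B(1)] x unfolding strong_sierpinski_set_def by blast
    then have "{y. (x, y) \<in> A} \<inter> {y. (x, y) \<in> B} \<noteq> {}" by (metis countable_empty)
    then show ?thesis by blast
  qed
  show "\<not> B \<subseteq> A"
  proof
    assume BA: "B \<subseteq> A"
    obtain y where y: "\<not> lnull {x. (x, y) \<in> B}" using fubini_row[OF B] by blast
    obtain Z :: "real set" where Z: "lnull Z" "meager (- Z)" using Z_exists by blast
    have "countable ({x. (x, y) \<in> A} \<inter> - Z)"
      using rows[of y] Z(2) unfolding strong_luzin_set_def luzin_set_def by blast
    then have "lnull ({x. (x, y) \<in> A} \<inter> - Z)" by (rule lnull_countable)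
    then have "lnull (({x. (x, y) \<in> A} \<inter> - Z) \<union> Z)" using Z(1) unfolding lnull_def by (rule null_sets.Un)
    moreover have "{x. (x, y) \<in> B} \<subseteq> ({x. (x, y) \<in> A} \<inter> - Z) \<union> Z" using BA by blast
    ultimately show False using y lnull_subset by blast
  qed
qed

theorem mainTheorem4:
  assumes "CH"
  shows "\<exists>A :: (real \<times> real) set.
           (\<forall>y. strong_luzin_set {x. (x, y) \<in> A}) \<and>
           (\<forall>x. strong_sierpinski_set {y. (x, y) \<in> A}) \<and>
           completely_nonmeasurable meager A \<and>
           completely_nonmeasurable lnull A"
proof -
  obtain r :: "real rel" where r: "Well_order r" "Field r = UNIV" "\<And>a. countable {b. (b, a) \<in> r}"
    using CH_order[OF assms] by metis
  interpret chord r using r by unfold_locales auto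
  have rows: "strong_luzin_set {x. (x, y) \<in> AA}" for y
  proof -
    have "uncountable ({x. (x, y) \<in> AA} \<inter> UNIV)"
      by (rule row_dense) (auto simp: open_not_meager)
    then have "{x. (x, y) \<in> AA} \<approx> (UNIV::real set)" using assms unfolding CH_def by simp
    then show ?thesis unfolding strong_luzin_set_def luzin_set_def
      using row_countable row_dense by blast
  qed
  have cols: "strong_sierpinski_set {y. (x, y) \<in> AA}" for x
  proof -
    have "uncountable ({y. (x, y) \<in> AA} \<inter> UNIV)"
      by (rule col_dense) (auto simp: not_lnull_UNIV)
    then have "{y. (x, y) \<in> AA} \<approx> (UNIV::real set)" using assms unfolding CH_def by simp
    then show ?thesis unfolding strong_sierpinski_set_def sierpinski_set_def
      using col_countable col_dense by blast
  qed
  show ?thesis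
    using rows cols twoD_meager[OF rows cols] twoD_null[OF rows cols] by blast
qed


end
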